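(* Let $f:\mathbb{R}^\ell\times\mathbb{R}^m\to\mathbb{R}^\ell$ be $C^1$, let $\Lambda$ be a parameter shift with limits $\lambda_\pm$, and let $X$ define a stable path. For $s\in\mathbb{R}$ and $n\in\mathbb{N}$ let $B_n(s)=[D_xf(X(s),\Lambda(s))]^n$. Then there are constants $\kappa>0$ and $c\in(0,1)$ such that $\|B_n(s)\|<\kappa c^n$ for every $s\in\mathbb{R}$ and $n\in\mathbb{N}$, where $\|\cdot\|$ is the matrix norm induced by the Euclidean norm.
   Context: A parameter shift is a $C^1$ function $\Lambda:\mathbb{R}\to\mathbb{R}^m$ with $\lim_{s\to\pm\infty}\Lambda(s)=\lambda_\pm$ and $\lim_{s\to\pm\infty}\Lambda'(s)=0$. A stable path is given by $X:\mathbb{R}\to\mathbb{R}^\ell$ such that: $X(s)$ is a fixed point of $f(\cdot,\Lambda(s))$ for every $s$; $\{(s,X(s))\}$ is a connected curve; the limits $X_\pm=\lim_{s\to\pm\infty}X(s)$ exist and are fixed points of $f(\cdot,\lambda_\pm)$; and the spectral radius of $D_xf(X(s),\Lambda(s))$ is $<1$ for all $s\in\mathbb{R}\cup\{\pm\infty\}$ (with $X(\pm\infty)=X_\pm$, $\Lambda(\pm\infty)=\lambda_\pm$). *)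

theory Defs
  imports "HOL-Analysis.Analysis"
begin

text \<open>Continuously differentiable maps between Euclidean spaces: a Frechet derivative
  exists everywhere and depends continuously (in operator norm) on the point.\<close>
definition C1 :: "('a::euclidean_space \<Rightarrow> 'b::euclidean_space) \<Rightarrow> bool" where
  "C1 g \<longleftrightarrow> (\<exists>g' :: 'a \<Rightarrow> ('a \<Rightarrow>\<^sub>L 'b).
      (\<forall>z. (g has_derivative blinfun_apply (g' z)) (at z)) \<and> continuous_on UNIV g')"

text \<open>Matrix powers (for matrices, the ring power on vec is componentwise, so we define it).\<close>
fun matpow :: "real^'n^'n \<Rightarrow> nat \<Rightarrow> real^'n^'n" where
  "matpow A 0 = mat 1"
| "matpow A (Suc n) = A ** matpow A n"

text \<open>Spectral radius of a real square matrix: the maximal modulus of its (complex) eigenvalues.\<close>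
definition cx_eigenvalue :: "real^'n^'n \<Rightarrow> complex \<Rightarrow> bool" where
  "cx_eigenvalue A z \<longleftrightarrow>
     (\<exists>v :: complex^'n. v \<noteq> 0 \<and> (\<chi> i j. complex_of_real (A $ i $ j)) *v v = z *s v)"

definition spectral_radius :: "real^'n^'n \<Rightarrow> real" where
  "spectral_radius A = Max {cmod z | z. cx_eigenvalue A z}"

text \<open>Partial Jacobian D_x f(x,p) as an l x l matrix.\<close>
definition Dx :: "((real^'l) \<times> (real^'m) \<Rightarrow> real^'l) \<Rightarrow> real^'l \<Rightarrow> real^'m \<Rightarrow> real^'l^'l" where
  "Dx f x p = matrix (frechet_derivative (\<lambda>y. f (y, p)) (at x))"

definition parameter_shift :: "(real \<Rightarrow> real^'m) \<Rightarrow> real^'m \<Rightarrow> real^'m \<Rightarrow> bool" where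
  "parameter_shift \<Lambda> lm lp \<longleftrightarrow>
     (\<exists>\<Lambda>'. (\<forall>s. (\<Lambda> has_vector_derivative \<Lambda>' s) (at s)) \<and> continuous_on UNIV \<Lambda>' \<and>
        (\<Lambda> \<longlongrightarrow> lm) at_bot \<and> (\<Lambda> \<longlongrightarrow> lp) at_top \<and>
        (\<Lambda>' \<longlongrightarrow> 0) at_bot \<and> (\<Lambda>' \<longlongrightarrow> 0) at_top)"

definition stable_path ::
  "((real^'l) \<times> (real^'m) \<Rightarrow> real^'l) \<Rightarrow> (real \<Rightarrow> real^'m) \<Rightarrow> real^'m \<Rightarrow> real^'m
     \<Rightarrow> (real \<Rightarrow> real^'l) \<Rightarrow> bool" where
  "stable_path f \<Lambda> lm lp X \<longleftrightarrow>
     (\<forall>s. f (X s, \<Lambda> s) = X s) \<and>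
     connected (range (\<lambda>s. (s, X s))) \<and>
     (\<exists>Xm Xp. (X \<longlongrightarrow> Xm) at_bot \<and> (X \<longlongrightarrow> Xp) at_top \<and>
        f (Xm, lm) = Xm \<and> f (Xp, lp) = Xp \<and>
        spectral_radius (Dx f Xm lm) < 1 \<and> spectral_radius (Dx f Xp lp) < 1) \<and>
     (\<forall>s. spectral_radius (Dx f (X s) (\<Lambda> s)) < 1)"

end

theory Submission imports Defs "Jordan_Normal_Form.Spectral_Radius" begin
no_notation Matrix.vec_index (infixl "$" 100)

lemma matpow_Suc': "matpow M (Suc k) = matpow M k ** M"
proof (induction k)
  case 0 show ?case by simp
next
  case (Suc k)
  have "matpow M (Suc (Suc k)) = M ** (matpow M k ** M)" using Suc by simp
  also have "\<dots> = matpow M (Suc k) ** M" by (simp add: matrix_mul_assoc)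
  finally show ?case .
qed

lemma matpow_scaleR: "matpow (c *\<^sub>R M) k = (c ^ k) *\<^sub>R matpow M k"
  by (induction k) (simp_all add: matrix_scalar_ac scalar_matrix_assoc[symmetric])

definition cv :: "(nat \<Rightarrow> 'n::finite) \<Rightarrow> real^'n^'n \<Rightarrow> complex mat" where
  "cv e M = mat CARD('n) CARD('n) (\<lambda>(i,j). complex_of_real (M $ e i $ e j))"

lemma cv_carrier: "cv e (M::real^'n::finite^'n) \<in> carrier_mat CARD('n) CARD('n)"
  by (simp add: cv_def)

lemma sum_reindex_e:
  assumes e: "bij_betw e {..<CARD('n)} (UNIV::'n::finite set)"
  shows "(\<Sum>k\<in>{0..<CARD('n)}. g (e k)) = (\<Sum>j\<in>UNIV. g j)"
  using sum.reindex_bij_betw[OF e, of g] by (simp add: atLeast0LessThan)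

lemma cv_mult:
  assumes e: "bij_betw e {..<CARD('n)} (UNIV::'n::finite set)"
  shows "cv e (M ** N) = cv e M * cv e (N :: real^'n^'n)"
proof (rule eq_matI)
  fix i j assume i: "i < dim_row (cv e M * cv e N)" and j: "j < dim_col (cv e M * cv e N)"
  hence i': "i < CARD('n)" and j': "j < CARD('n)" by (auto simp: cv_def)
  have "(cv e M * cv e N) $$ (i,j) = (\<Sum>k\<in>{0..<CARD('n)}. complex_of_real (M $ e i $ e k) * complex_of_real (N $ e k $ e j))"
    using i' j' by (simp add: cv_def scalar_prod_def)
  also have "\<dots> = (\<Sum>k\<in>UNIV. complex_of_real (M $ e i $ k) * complex_of_real (N $ k $ e j))"
    by (rule sum_reindex_e[OF e])
  also have "\<dots> = cv e (M ** N) $$ (i,j)"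
    using i' j' by (simp add: cv_def matrix_matrix_mult_def)
  finally show "cv e (M ** N) $$ (i,j) = (cv e M * cv e N) $$ (i,j)" by simp
qed (auto simp: cv_def)

lemma cv_one:
  assumes e: "bij_betw e {..<CARD('n)} (UNIV::'n::finite set)"
  shows "cv e (Finite_Cartesian_Product.mat 1 :: real^'n^'n) = 1\<^sub>m CARD('n)"
proof (rule eq_matI)
  fix i j assume "i < dim_row (1\<^sub>m CARD('n))" "j < dim_col (1\<^sub>m CARD('n))"
  hence i: "i < CARD('n)" and j: "j < CARD('n)" by auto
  have "e i = e j \<longleftrightarrow> i = j" using e i j unfolding bij_betw_def inj_on_def by auto
  thus "cv e (Finite_Cartesian_Product.mat 1 :: real^'n^'n) $$ (i,j) = 1\<^sub>m CARD('n) $$ (i,j)"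
    using i j by (simp add: cv_def Finite_Cartesian_Product.mat_def)
qed (auto simp: cv_def)

lemma cv_pow:
  assumes e: "bij_betw e {..<CARD('n)} (UNIV::'n::finite set)"
  shows "cv e (matpow M k) = cv e (M :: real^'n^'n) ^\<^sub>m k"
proof (induction k)
  case 0 show ?case using cv_one[OF e] by (simp add: cv_def)
next
  case (Suc k)
  show ?case by (simp only: matpow_Suc' cv_mult[OF e] Suc) simp
qed

lemma cv_eig:
  assumes e: "bij_betw e {..<CARD('n)} (UNIV::'n::finite set)"
  shows "eigenvalue (cv e M) z \<longleftrightarrow> cx_eigenvalue (M :: real^'n^'n) z"
proof -
  define ei where "ei = inv_into {..<CARD('n)} e"
  have ei1: "e (ei i) = i" for i using e unfolding ei_def bij_betw_def
    by (simp add: f_inv_into_f)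
  have ei2: "ei i < CARD('n)" for i using e unfolding ei_def bij_betw_def
    by (metis UNIV_I inv_into_into lessThan_iff)
  have ei3: "k < CARD('n) \<Longrightarrow> ei (e k) = k" for k using e unfolding ei_def bij_betw_def
    by (simp add: inv_into_f_f)
  let ?C = "(\<chi> i j. complex_of_real (M $ i $ j)) :: complex^'n^'n"
  show ?thesis
  proof
    assume "eigenvalue (cv e M) z"
    then obtain v where v: "v \<in> carrier_vec CARD('n)" "v \<noteq> 0\<^sub>v CARD('n)"
      "cv e M *\<^sub>v v = z \<cdot>\<^sub>v v"
      unfolding eigenvalue_def eigenvector_def by (auto simp: cv_def)
    define w :: "complex^'n" where "w = (\<chi> i. Matrix.vec_index v (ei i))"
    have "w \<noteq> 0"
    proof
      assume w0: "w = 0"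
      have "v = 0\<^sub>v CARD('n)"
      proof (rule eq_vecI)
        fix k assume "k < dim_vec (0\<^sub>v CARD('n) :: complex vec)"
        hence k: "k < CARD('n)" by simp
        have "Matrix.vec_index v k = w $ e k" unfolding w_def using ei3[OF k] by simp
        thus "Matrix.vec_index v k = Matrix.vec_index (0\<^sub>v CARD('n)) k" using w0 k by simp
      qed (use v in auto)
      thus False using v by simp
    qed
    moreover have "?C *v w = z *s w"
    proof (subst Finite_Cartesian_Product.vec_eq_iff, intro allI)
      fix i
      have "Matrix.vec_index (cv e M *\<^sub>v v) (ei i) = Matrix.vec_index (z \<cdot>\<^sub>v v) (ei i)" using v by simp
      hence "(\<Sum>k\<in>{0..<CARD('n)}. complex_of_real (M $ i $ e k) * Matrix.vec_index v k) = z * w $ i"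
        using ei2[of i] v(1) by (simp add: cv_def scalar_prod_def ei1 w_def)
      also have "(\<Sum>k\<in>{0..<CARD('n)}. complex_of_real (M $ i $ e k) * Matrix.vec_index v k)
          = (\<Sum>k\<in>{0..<CARD('n)}. (\<lambda>j. complex_of_real (M $ i $ j) * w $ j) (e k))"
        by (rule sum.cong) (auto simp: w_def ei3)
      also have "\<dots> = (\<Sum>j\<in>UNIV. complex_of_real (M $ i $ j) * w $ j)"
        by (rule sum_reindex_e[OF e])
      finally show "(?C *v w) $ i = (z *s w) $ i" by (simp add: matrix_vector_mult_def)
    qed
    ultimately show "cx_eigenvalue M z" unfolding cx_eigenvalue_def by blast
  next
    assume "cx_eigenvalue M z"
    then obtain w :: "complex^'n" where w: "w \<noteq> 0" "?C *v w = z *s w"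
      unfolding cx_eigenvalue_def by blast
    define v where "v = vec CARD('n) (\<lambda>k. w $ e k)"
    have vc: "v \<in> carrier_vec CARD('n)" by (simp add: v_def)
    have "v \<noteq> 0\<^sub>v CARD('n)"
    proof
      assume v0: "v = 0\<^sub>v CARD('n)"
      have "w = 0"
      proof (subst Finite_Cartesian_Product.vec_eq_iff, intro allI)
        fix i
        have "w $ i = Matrix.vec_index v (ei i)" using ei2[of i] by (simp add: v_def ei1)
        thus "w $ i = 0 $ i" using v0 ei2[of i] by simp
      qed
      thus False using w by simp
    qed
    moreover have "cv e M *\<^sub>v v = z \<cdot>\<^sub>v v"
    proof (rule eq_vecI)
      fix k assume "k < dim_vec (z \<cdot>\<^sub>v v)"
      hence k: "k < CARD('n)" by (simp add: v_def)
      have "Matrix.vec_index (cv e M *\<^sub>v v) k = (\<Sum>l\<in>{0..<CARD('n)}. (\<lambda>j. complex_of_real (M $ e k $ j) * w $ j) (e l))"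
        using k by (simp add: cv_def scalar_prod_def v_def)
      also have "\<dots> = (\<Sum>j\<in>UNIV. complex_of_real (M $ e k $ j) * w $ j)"
        by (rule sum_reindex_e[OF e])
      also have "\<dots> = (?C *v w) $ e k" by (simp add: matrix_vector_mult_def)
      also have "\<dots> = Matrix.vec_index (z \<cdot>\<^sub>v v) k" using w(2) k by (simp add: v_def)
      finally show "Matrix.vec_index (cv e M *\<^sub>v v) k = Matrix.vec_index (z \<cdot>\<^sub>v v) k" .
    qed (simp add: cv_def v_def)
    ultimately show "eigenvalue (cv e M) z"
      unfolding eigenvalue_def eigenvector_def using vc by (auto simp: cv_def)
  qed
qed

lemma sr_decay:
  fixes A :: "real^'n::finite^'n"
  assumes sr: "Defs.spectral_radius A < 1"
  shows "\<exists>K r. 0 < r \<and> r < 1 \<and> (\<forall>k. onorm ((*v) (matpow A k)) \<le> K * r^k)"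
proof -
  obtain e0 where e0: "bij_betw e0 {0..<card (UNIV::'n set)} (UNIV::'n set)"
    using ex_bij_betw_nat_finite[of "UNIV::'n set"] by auto
  have e: "bij_betw e0 {..<CARD('n)} (UNIV::'n set)" using e0 by (simp add: atLeast0LessThan)
  have n0: "0 < CARD('n)" by simp
  have spec: "{z. cx_eigenvalue M z} = spectrum (cv e0 M)" for M :: "real^'n^'n"
    using cv_eig[OF e] by (auto simp: spectrum_def)
  have setA: "{cmod z | z. cx_eigenvalue A z} = cmod ` spectrum (cv e0 A)"
    using spec[of A] by auto
  have fin: "finite (cmod ` spectrum (cv e0 A))"
    using card_finite_spectrum(1)[OF cv_carrier] by (rule finite_imageI)
  have ne: "cmod ` spectrum (cv e0 A) \<noteq> {}"
    using spectrum_non_empty[OF cv_carrier n0] by simp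
  define \<rho> where "\<rho> = Defs.spectral_radius A"
  have \<rho>: "\<rho> = Max (cmod ` spectrum (cv e0 A))" unfolding \<rho>_def Defs.spectral_radius_def setA ..
  have \<rho>ge: "cmod z \<le> \<rho>" if "cx_eigenvalue A z" for z
    unfolding \<rho> proof (rule Max_ge[OF fin])
    show "cmod z \<in> cmod ` spectrum (cv e0 A)" using that spec[of A] by auto
  qed
  have \<rho>0: "0 \<le> \<rho>" proof -
    obtain z where "z \<in> spectrum (cv e0 A)" using ne by auto
    hence "cmod z \<le> Max (cmod ` spectrum (cv e0 A))" by (intro Max_ge[OF fin] imageI)
    thus ?thesis using norm_ge_zero[of z] unfolding \<rho> by linarith
  qed
  define r where "r = (\<rho> + 1) / 2"
  have r0: "0 < r" and r1: "r < 1" and \<rho>r: "\<rho> < r" using \<rho>0 sr unfolding r_def \<rho>_def by auto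
  define B where "B = (1/r) *\<^sub>R A"
  have eigB: "cx_eigenvalue A (complex_of_real r * z)" if Beig: "cx_eigenvalue B z" for z
  proof -
    obtain v :: "complex^'n" where v: "v \<noteq> 0" "(\<chi> i j. complex_of_real (B $ i $ j)) *v v = z *s v"
      using Beig unfolding cx_eigenvalue_def by auto
    have "(\<chi> i j. complex_of_real (A $ i $ j)) *v v = complex_of_real r *s ((\<chi> i j. complex_of_real (B $ i $ j)) *v v)"
    proof (subst Finite_Cartesian_Product.vec_eq_iff, intro allI)
      fix i
      have "(\<Sum>j\<in>UNIV. complex_of_real (A $ i $ j) * v $ j) = (\<Sum>j\<in>UNIV. complex_of_real r * (complex_of_real (B $ i $ j) * v $ j))"
        using r0 by (intro sum.cong refl) (simp add: B_def)
      thus "((\<chi> i j. complex_of_real (A $ i $ j)) *v v) $ i = (complex_of_real r *s ((\<chi> i j. complex_of_real (B $ i $ j)) *v v)) $ i"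
        by (simp add: matrix_vector_mult_def sum_distrib_left)
    qed
    also have "\<dots> = (complex_of_real r * z) *s v" using v(2) by (simp add: vector_smult_assoc)
    finally have "(\<chi> i j. complex_of_real (A $ i $ j)) *v v = (complex_of_real r * z) *s v" .
    thus ?thesis using v(1) unfolding cx_eigenvalue_def by auto
  qed
  have "Spectral_Radius.spectral_radius (cv e0 B) \<in> norm ` spectrum (cv e0 B)"
    by (rule spectral_radius_mem_max(1)[OF cv_carrier n0])
  then obtain z0 where z0: "z0 \<in> spectrum (cv e0 B)" "Spectral_Radius.spectral_radius (cv e0 B) = cmod z0" by auto
  have "cx_eigenvalue B z0" using z0(1) cv_eig[OF e, of B z0] by (simp add: spectrum_def)
  from \<rho>ge[OF eigB[OF this]] have "r * cmod z0 \<le> \<rho>" using r0 by (simp add: norm_mult)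
  hence "r * cmod z0 < r * 1" using \<rho>r by linarith
  hence "cmod z0 < 1" using r0 by (simp only: mult_less_cancel_left_pos)
  hence "Spectral_Radius.spectral_radius (cv e0 B) < 1" using z0 by simp
  from spectral_radius_jnf_norm_bound_less_1_upper_triangular[OF cv_carrier this]
  obtain c where c: "\<And>k. norm_bound (cv e0 B ^\<^sub>m k) c" by auto
  have comp: "\<bar>matpow A k $ i $ j\<bar> \<le> c * r^k" for k i j
  proof -
    obtain i' where i': "i' < CARD('n)" "e0 i' = i" using e unfolding bij_betw_def by (metis UNIV_I imageE lessThan_iff)
    obtain j' where j': "j' < CARD('n)" "e0 j' = j" using e unfolding bij_betw_def by (metis UNIV_I imageE lessThan_iff)
    have "norm ((cv e0 B ^\<^sub>m k) $$ (i', j')) \<le> c" using c[of k] i' j' cv_carrier[of e0 B]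
      unfolding norm_bound_def by (metis carrier_matD(1,2) pow_carrier_mat)
    hence "norm ((cv e0 (matpow B k)) $$ (i', j')) \<le> c" by (simp add: cv_pow[OF e])
    hence "\<bar>matpow B k $ i $ j\<bar> \<le> c" using i' j' by (simp add: cv_def)
    hence "\<bar>(1/r)^k * matpow A k $ i $ j\<bar> \<le> c" by (simp add: B_def matpow_scaleR)
    hence "(1/r)^k * \<bar>matpow A k $ i $ j\<bar> \<le> c" using r0 by (simp add: abs_mult)
    thus ?thesis using r0 by (simp add: field_simps)
  qed
  have "onorm ((*v) (matpow A k)) \<le> (real CARD('n) * real CARD('n) * c) * r^k" for k
    using onorm_le_matrix_component[of "matpow A k" "c * r^k", OF comp] by (simp add: mult.assoc)
  thus ?thesis using r0 r1 by blast
qed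

definition nrm :: "real^'n::finite^'n \<Rightarrow> real" where
  "nrm M = onorm ((*v) M)"

lemma nrm_ge0: "0 \<le> nrm M"
  unfolding nrm_def by (rule onorm_pos_le) simp

lemma nrm_mult: "nrm (A ** B) \<le> nrm A * nrm (B :: real^'n::finite^'n)"
proof -
  have "(*v) (A ** B) = (*v) A \<circ> (*v) B" by (auto simp: matrix_vector_mul_assoc)
  thus ?thesis unfolding nrm_def using onorm_compose[of "(*v) A" "(*v) B"] by simp
qed

lemma nrm_le_norm: "nrm (M :: real^'n::finite^'n) \<le> (real CARD('n) * real CARD('n)) * norm M"
proof -
  have "\<bar>M $ i $ j\<bar> \<le> norm M" for i j
    using component_le_norm_cart[of "M $ i" j] Finite_Cartesian_Product.norm_nth_le[of M i] by linarith
  thus ?thesis unfolding nrm_def by (rule onorm_le_matrix_component)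
qed

lemma nrm_triangle: "nrm A \<le> nrm B + nrm (A - (B :: real^'n::finite^'n))"
proof -
  have "(*v) A = (\<lambda>x. B *v x + (A - B) *v x)" by (auto simp: matrix_vector_mult_diff_rdistrib)
  thus ?thesis unfolding nrm_def using onorm_triangle[of "(*v) B" "(*v) (A - B)"] by simp
qed

lemma matpow_add: "matpow A (m + n) = matpow A m ** matpow A n"
  by (induction m) (simp_all add: matrix_mul_assoc)

lemma nrm_matpow_le: "nrm (matpow A n) \<le> nrm (A :: real^'n::finite^'n) ^ n"
proof (induction n)
  case 0
  have "(*v) (Finite_Cartesian_Product.mat 1 :: real^'n^'n) = (\<lambda>x. x)" by (rule ext) simp
  hence "nrm (matpow A 0) = onorm (\<lambda>x::real^'n. x)" by (simp add: nrm_def)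
  thus ?case using onorm_id_le by simp
next
  case (Suc n)
  have "nrm (matpow A (Suc n)) \<le> nrm A * nrm (matpow A n)" using nrm_mult by simp
  also have "\<dots> \<le> nrm A * nrm A ^ n" by (rule mult_left_mono[OF Suc nrm_ge0])
  finally show ?case by simp
qed

lemma nrm_matpow_mult: "nrm (matpow A (N * q)) \<le> nrm (matpow (A :: real^'n::finite^'n) N) ^ q"
proof (induction q)
  case 0
  have "(*v) (Finite_Cartesian_Product.mat 1 :: real^'n^'n) = (\<lambda>x. x)" by (rule ext) simp
  hence "nrm (matpow A 0) = onorm (\<lambda>x::real^'n. x)" by (simp add: nrm_def)
  thus ?case using onorm_id_le by simp
next
  case (Suc q)
  have "matpow A (N * Suc q) = matpow A N ** matpow A (N * q)"
    using matpow_add[of A N "N * q"] by simp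
  hence "nrm (matpow A (N * Suc q)) \<le> nrm (matpow A N) * nrm (matpow A (N * q))" using nrm_mult by simp
  also have "\<dots> \<le> nrm (matpow A N) * nrm (matpow A N) ^ q" by (rule mult_left_mono[OF Suc nrm_ge0])
  finally show ?case by simp
qed

lemma tendsto_mm:
  fixes f g :: "'a \<Rightarrow> real^'n::finite^'n"
  assumes "(f \<longlongrightarrow> a) F" "(g \<longlongrightarrow> b) F"
  shows "((\<lambda>x. f x ** g x) \<longlongrightarrow> a ** b) F"
  unfolding matrix_matrix_mult_def
  by (intro tendsto_vec_lambda tendsto_sum tendsto_mult tendsto_vec_nth assms)

lemma tendsto_matpow:
  fixes f :: "'a \<Rightarrow> real^'n::finite^'n"
  assumes "(f \<longlongrightarrow> a) F"
  shows "((\<lambda>x. matpow (f x) N) \<longlongrightarrow> matpow a N) F"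
  by (induction N) (simp_all add: tendsto_mm assms)

definition decays :: "real^'n::finite^'n \<Rightarrow> bool" where
  "decays A \<longleftrightarrow> (\<exists>K r. 0 < r \<and> r < 1 \<and> (\<forall>k. nrm (matpow A k) \<le> K * r^k))"

lemma good_nbhd:
  fixes A0 :: "real^'n::finite^'n"
  assumes "decays A0"
  shows "\<exists>\<epsilon>>0. \<exists>K c. 0 \<le> K \<and> 0 < c \<and> c < 1 \<and>
           (\<forall>A. dist A A0 < \<epsilon> \<longrightarrow> (\<forall>n. nrm (matpow A n) \<le> K * c^n))"
proof -
  obtain K0 r0 where r0: "0 < r0" "r0 < 1" and K0: "\<And>k. nrm (matpow A0 k) \<le> K0 * r0^k"
    using assms unfolding decays_def by blast
  have "(\<lambda>N. K0 * r0^N) \<longlonglongrightarrow> 0"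
    using LIMSEQ_power_zero[of r0] r0 by (intro tendsto_mult_right_zero) simp
  hence "eventually (\<lambda>N. K0 * r0^N < 1/4) sequentially" by (rule order_tendstoD) simp
  then obtain N0 where N0: "\<And>N. N \<ge> N0 \<Longrightarrow> K0 * r0^N < 1/4" unfolding eventually_sequentially by blast
  define N where "N = Suc N0"
  have N0': "0 < N" by (simp add: N_def)
  have A0N: "nrm (matpow A0 N) < 1/4" using K0[of N] N0[of N] by (simp add: N_def)
  define n2 where "n2 = real CARD('n) * real CARD('n)"
  have n2: "0 < n2" by (simp add: n2_def)
  have "((\<lambda>A. matpow A N) \<longlongrightarrow> matpow A0 N) (at A0)" by (rule tendsto_matpow) (rule tendsto_ident_at)
  hence "eventually (\<lambda>A. dist (matpow A N) (matpow A0 N) < 1/(4*n2)) (at A0)"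
    using n2 by (intro tendstoD) auto
  then obtain d where d: "d > 0" and dP: "\<And>A. A \<noteq> A0 \<Longrightarrow> dist A A0 < d \<Longrightarrow> dist (matpow A N) (matpow A0 N) < 1/(4*n2)"
    unfolding eventually_at by auto
  define \<epsilon> where "\<epsilon> = min d 1"
  define R where "R = max 1 (nrm A0 + n2)"
  define c where "c = root N (1/2)"
  have c0: "0 < c" unfolding c_def using N0' by simp
  have c1: "c < 1" unfolding c_def using N0' by simp
  have cN: "c ^ N = 1/2" unfolding c_def using N0' by (simp add: real_root_pow_pos)
  have bound: "nrm (matpow A n) \<le> (2 * R^N) * c^n" if A: "dist A A0 < \<epsilon>" for A n
  proof -
    have AN: "nrm (matpow A N) \<le> 1/2"
    proof (cases "A = A0")
      case True thus ?thesis using A0N by simp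
    next
      case False
      hence "dist (matpow A N) (matpow A0 N) < 1/(4*n2)" using dP A by (simp add: \<epsilon>_def)
      hence "norm (matpow A N - matpow A0 N) < 1/(4*n2)" by (simp add: dist_norm)
      hence "n2 * norm (matpow A N - matpow A0 N) < n2 * (1/(4*n2))" by (rule mult_strict_left_mono[OF _ n2])
      hence "n2 * norm (matpow A N - matpow A0 N) \<le> 1/4" using n2 by simp
      moreover have "nrm (matpow A N) \<le> nrm (matpow A0 N) + nrm (matpow A N - matpow A0 N)" by (rule nrm_triangle)
      moreover have "nrm (matpow A N - matpow A0 N) \<le> n2 * norm (matpow A N - matpow A0 N)"
        unfolding n2_def by (rule nrm_le_norm)
      ultimately show ?thesis using A0N by linarith
    qed
    have t1: "nrm A \<le> nrm A0 + nrm (A - A0)" by (rule nrm_triangle)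
    have t2: "nrm (A - A0) \<le> n2 * norm (A - A0)" unfolding n2_def by (rule nrm_le_norm)
    have "norm (A - A0) \<le> 1" using A by (simp add: \<epsilon>_def dist_norm)
    hence t3: "n2 * norm (A - A0) \<le> n2" using n2 by (simp add: mult_left_le)
    have nA: "nrm A \<le> R" unfolding R_def using t1 t2 t3 by linarith
    have R1: "1 \<le> R" unfolding R_def by simp
    define q where "q = n div N"
    define j where "j = n mod N"
    have nqj: "n = N * q + j" unfolding q_def j_def by simp
    have jN: "j \<le> N" unfolding j_def using N0' by (simp add: less_imp_le)
    have "nrm (matpow A n) \<le> nrm (matpow A (N * q)) * nrm (matpow A j)"
      unfolding nqj matpow_add by (rule nrm_mult)
    also have "\<dots> \<le> (1/2)^q * R^N"
    proof (rule mult_mono)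
      show "nrm (matpow A (N * q)) \<le> (1/2)^q"
        using nrm_matpow_mult[of A N q] power_mono[OF AN nrm_ge0, of q] by linarith
      have "nrm (matpow A j) \<le> nrm A ^ j" by (rule nrm_matpow_le)
      also have "\<dots> \<le> R ^ j" by (rule power_mono[OF nA nrm_ge0])
      also have "\<dots> \<le> R ^ N" by (rule power_increasing[OF jN R1])
      finally show "nrm (matpow A j) \<le> R ^ N" .
    qed (use R1 nrm_ge0 in auto)
    also have "\<dots> \<le> (2 * R^N) * c^n"
    proof -
      have "c ^ N \<le> c ^ j" by (rule power_decreasing[OF jN]) (use c0 c1 in auto)
      hence "1/2 \<le> c ^ j" using cN by simp
      have "c ^ n = (1/2)^q * c^j" unfolding nqj power_add power_mult cN by simp
      hence "(1/2)^q * (1/2) \<le> c^n" using \<open>1/2 \<le> c ^ j\<close> by (simp add: mult_left_mono)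
      hence "2 * R^N * ((1/2)^q * (1/2)) \<le> 2 * R^N * c^n"
        by (rule mult_left_mono) (use R1 in simp)
      thus ?thesis by (simp add: algebra_simps)
    qed
    finally show ?thesis .
  qed
  have R0: "0 \<le> 2 * R^N" unfolding R_def by simp
  show ?thesis
  proof (rule exI[of _ \<epsilon>], intro conjI)
    show "0 < \<epsilon>" using d by (simp add: \<epsilon>_def)
    show "\<exists>K c. 0 \<le> K \<and> 0 < c \<and> c < 1 \<and> (\<forall>A. dist A A0 < \<epsilon> \<longrightarrow> (\<forall>n. nrm (matpow A n) \<le> K * c^n))"
      by (rule exI[of _ "2 * R^N"], rule exI[of _ c]) (use R0 c0 c1 bound in auto)
  qed
qed

lemma good_compact:
  fixes S :: "(real^'n::finite^'n) set"
  assumes S: "compact S" and dec: "\<And>A. A \<in> S \<Longrightarrow> decays A"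
  shows "\<exists>K c. 0 \<le> K \<and> 0 < c \<and> c < 1 \<and> (\<forall>A\<in>S. \<forall>n. nrm (matpow A n) \<le> K * c^n)"
proof -
  have "\<forall>A0\<in>S. \<exists>p. 0 < fst p \<and> 0 \<le> fst (snd p) \<and> 0 < snd (snd p) \<and> snd (snd p) < 1 \<and>
          (\<forall>A. dist A A0 < fst p \<longrightarrow> (\<forall>n. nrm (matpow A n) \<le> fst (snd p) * snd (snd p)^n))"
  proof
    fix A0 assume "A0 \<in> S"
    then obtain \<epsilon> K c where "\<epsilon> > 0" "0 \<le> K" "0 < c" "c < 1"
      "\<forall>A. dist A A0 < \<epsilon> \<longrightarrow> (\<forall>n. nrm (matpow A n) \<le> K * c^n)"
      using good_nbhd[OF dec] by metis
    thus "\<exists>p. 0 < fst p \<and> 0 \<le> fst (snd p) \<and> 0 < snd (snd p) \<and> snd (snd p) < 1 \<and>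
          (\<forall>A. dist A A0 < fst p \<longrightarrow> (\<forall>n. nrm (matpow A n) \<le> fst (snd p) * snd (snd p)^n))"
      by (intro exI[of _ "(\<epsilon>, K, c)"]) simp
  qed
  then obtain P where P: "\<And>A0. A0 \<in> S \<Longrightarrow> 0 < fst (P A0) \<and> 0 \<le> fst (snd (P A0)) \<and> 0 < snd (snd (P A0)) \<and> snd (snd (P A0)) < 1 \<and>
          (\<forall>A. dist A A0 < fst (P A0) \<longrightarrow> (\<forall>n. nrm (matpow A n) \<le> fst (snd (P A0)) * snd (snd (P A0))^n))"
    by (metis bchoice)
  have cov: "S \<subseteq> (\<Union>A0\<in>S. ball A0 (fst (P A0)))"
  proof
    fix A assume "A \<in> S" thus "A \<in> (\<Union>A0\<in>S. ball A0 (fst (P A0)))" using P[of A] by (intro UN_I[of A]) auto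
  qed
  obtain C where C: "C \<subseteq> S" "finite C" "S \<subseteq> (\<Union>A0\<in>C. ball A0 (fst (P A0)))"
    using compactE_image[OF S _ cov] by blast
  define K where "K = Max (insert 0 ((\<lambda>A0. fst (snd (P A0))) ` C))"
  define c where "c = Max (insert (1/2) ((\<lambda>A0. snd (snd (P A0))) ` C))"
  have K0: "0 \<le> K" unfolding K_def using C(2) by simp
  have "1/2 \<le> c" unfolding c_def using C(2) by (intro Max_ge) auto
  hence c0: "0 < c" by simp
  have c1: "c < 1" unfolding c_def using C P by (auto simp: Max_less_iff)
  have "nrm (matpow A n) \<le> K * c^n" if "A \<in> S" for A n
  proof -
    obtain A0 where A0: "A0 \<in> C" "A \<in> ball A0 (fst (P A0))" using C(3) \<open>A \<in> S\<close> by blast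
    have PA0: "0 \<le> fst (snd (P A0))" "0 < snd (snd (P A0))" using P[of A0] A0(1) C(1) by auto
    have "nrm (matpow A n) \<le> fst (snd (P A0)) * snd (snd (P A0))^n"
      using P[of A0] A0 C(1) by (auto simp: dist_commute)
    also have "\<dots> \<le> K * c^n"
    proof (rule mult_mono)
      show "fst (snd (P A0)) \<le> K" unfolding K_def using C(2) A0(1) by (intro Max_ge) auto
      have "snd (snd (P A0)) \<le> c" unfolding c_def using C(2) A0(1) by (intro Max_ge) auto
      thus "snd (snd (P A0)) ^ n \<le> c ^ n" using PA0 by (intro power_mono) auto
    qed (use K0 c0 PA0 in auto)
    finally show ?thesis .
  qed
  thus ?thesis using K0 c0 c1 by blast
qed

lemma sr_decays: "Defs.spectral_radius A < 1 \<Longrightarrow> decays A"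
  using sr_decay[of A] unfolding decays_def nrm_def by blast

lemma decays_fix:
  assumes "decays A" "A *v v = v"
  shows "v = 0"
proof (rule ccontr)
  assume v0: "v \<noteq> 0"
  obtain K r where r: "0 < r" "r < 1" and K: "\<And>k. nrm (matpow A k) \<le> K * r^k"
    using assms(1) unfolding decays_def by blast
  have pv: "matpow A k *v v = v" for k
    by (induction k) (simp_all add: matrix_vector_mul_assoc[symmetric] assms(2))
  have "1 \<le> K * r^k" for k
  proof -
    have "norm v = norm (matpow A k *v v)" using pv by simp
    also have "\<dots> \<le> nrm (matpow A k) * norm v" unfolding nrm_def by (rule onorm) simp
    also have "\<dots> \<le> (K * r^k) * norm v" by (rule mult_right_mono[OF K]) simp
    finally show ?thesis using v0 by simp
  qed
  moreover have "(\<lambda>k. K * r^k) \<longlonglongrightarrow> 0"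
    using LIMSEQ_power_zero[of r] r by (intro tendsto_mult_right_zero) simp
  hence "eventually (\<lambda>k. K * r^k < 1) sequentially" by (rule order_tendstoD) simp
  then obtain k0 where "\<And>k. k \<ge> k0 \<Longrightarrow> K * r^k < 1" unfolding eventually_sequentially by blast
  ultimately show False by (meson le_refl not_le)
qed

lemma partial_deriv:
  fixes f :: "(real^'l::finite) \<times> (real^'m::finite) \<Rightarrow> real^'l"
  assumes df: "\<And>z. (f has_derivative blinfun_apply (f' z)) (at z)"
  shows "((\<lambda>y. f (y, p)) has_derivative (\<lambda>v. Dx f x p *v v)) (at x)"
    and "Dx f x p = matrix (\<lambda>v. blinfun_apply (f' (x, p)) (v, 0))"
proof -
  have d1: "((\<lambda>y. (y, p)) has_derivative (\<lambda>v. (v, 0))) (at x)"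
    by (intro has_derivative_Pair has_derivative_ident has_derivative_const)
  have d2: "((\<lambda>y. f (y, p)) has_derivative (\<lambda>v. blinfun_apply (f' (x, p)) (v, 0))) (at x)"
    using diff_chain_at[OF d1 df[of "(x,p)"]] by (simp add: o_def)
  have fd: "frechet_derivative (\<lambda>y. f (y, p)) (at x) = (\<lambda>v. blinfun_apply (f' (x, p)) (v, 0))"
    using frechet_derivative_at[OF d2] by simp
  show D: "Dx f x p = matrix (\<lambda>v. blinfun_apply (f' (x, p)) (v, 0))"
    unfolding Dx_def fd ..
  have lin: "bounded_linear (\<lambda>v. blinfun_apply (f' (x, p)) (v, 0))"
    using has_derivative_bounded_linear[OF d2] .
  have "(\<lambda>v. Dx f x p *v v) = (\<lambda>v. blinfun_apply (f' (x, p)) (v, 0))"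
    unfolding D using matrix_vector_mul(3)[OF lin] .
  thus "((\<lambda>y. f (y, p)) has_derivative (\<lambda>v. Dx f x p *v v)) (at x)" using d2 by simp
qed

lemma Dx_cont:
  fixes f :: "(real^'l::finite) \<times> (real^'m::finite) \<Rightarrow> real^'l"
  assumes df: "\<And>z. (f has_derivative blinfun_apply (f' z)) (at z)" and cf: "continuous_on UNIV f'"
  shows "continuous_on UNIV (\<lambda>z. Dx f (fst z) (snd z))"
proof -
  have eq: "(\<lambda>z. Dx f (fst z) (snd z)) = (\<lambda>z. \<chi> i j. blinfun_apply (f' z) (axis j 1, 0) $ i)"
    using partial_deriv(2)[OF df] by (simp add: matrix_def)
  show ?thesis unfolding eq
    by (intro continuous_on_vec_lambda continuous_on_component blinfun.continuous_on cf continuous_on_const)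
qed

lemma box:
  fixes f :: "(real^'l::finite) \<times> (real^'m::finite) \<Rightarrow> real^'l" and \<Lambda> :: "real \<Rightarrow> real^'m"
    and D :: "real^'l \<Rightarrow> real^'m \<Rightarrow> real^'l^'l"
  assumes fc: "continuous_on UNIV f"
    and pd: "\<And>x p. ((\<lambda>y. f (y, p)) has_derivative (\<lambda>v. D x p *v v)) (at x)"
    and Dc: "continuous_on UNIV (\<lambda>z. D (fst z) (snd z))"
    and \<Lambda>c: "continuous_on UNIV \<Lambda>"
    and fix0: "f (x0, \<Lambda> s0) = x0"
    and inj0: "\<And>v. D x0 (\<Lambda> s0) *v v = v \<Longrightarrow> v = 0"
  shows "\<exists>\<delta>>0. \<exists>r>0. \<exists>g. continuous_on (ball s0 \<delta>) g \<and>
           (\<forall>s\<in>ball s0 \<delta>. dist (g s) x0 < r \<and> f (g s, \<Lambda> s) = g s) \<and>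
           (\<forall>s\<in>ball s0 \<delta>. \<forall>x. dist x x0 < r \<longrightarrow> f (x, \<Lambda> s) = x \<longrightarrow> x = g s)"
proof -
  define D0 where "D0 = D x0 (\<Lambda> s0)"
  define L0 where "L0 = (\<lambda>v::real^'l. v - D0 *v v)"
  have linL0: "linear L0" unfolding L0_def
    by (intro linear_compose_sub bounded_linear.linear[OF bounded_linear_ident] matrix_vector_mul_linear)
  have injL0: "inj L0"
  proof (rule injI)
    fix v w assume "L0 v = L0 w"
    hence "D0 *v (v - w) = v - w" unfolding L0_def by (simp add: matrix_vector_mult_diff_distrib algebra_simps)
    hence "v - w = 0" using inj0 unfolding D0_def by blast
    thus "v = w" by simp
  qed
  obtain Li where linLi: "linear Li" and Li1: "\<And>x. Li (L0 x) = x" and Li2: "\<And>x. L0 (Li x) = x"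
    using linear_injective_isomorphism[OF linL0 injL0] by blast
  have blLi: "bounded_linear Li" using linLi by (simp add: linear_conv_bounded_linear)
  define BL where "BL = onorm Li"
  have BL0: "0 \<le> BL" unfolding BL_def by (rule onorm_pos_le[OF blLi])
  have LiB: "norm (Li y) \<le> BL * norm y" for y unfolding BL_def by (rule onorm[OF blLi])
  have Li0: "Li y = 0 \<Longrightarrow> y = 0" for y using Li2[of y] linear_0[OF linL0] by simp
  define n2 where "n2 = real CARD('l) * real CARD('l)"
  have n2: "0 < n2" by (simp add: n2_def)
  define \<eta> where "\<eta> = 1 / (2 * (BL + 1) * n2)"
  have \<eta>: "0 < \<eta>" unfolding \<eta>_def using BL0 n2 by simp
  obtain d where d: "d > 0" and dD: "\<And>z. dist z (x0, \<Lambda> s0) < d \<Longrightarrow> dist (D (fst z) (snd z)) D0 < \<eta>"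
    using Dc \<eta> unfolding continuous_on_iff D0_def by (metis UNIV_I fst_conv snd_conv)
  define r where "r = d / 4"
  have r: "0 < r" unfolding r_def using d by simp
  obtain \<delta>1 where \<delta>1: "\<delta>1 > 0" and \<delta>1P: "\<And>s. dist s s0 < \<delta>1 \<Longrightarrow> dist (\<Lambda> s) (\<Lambda> s0) < d/2"
    using \<Lambda>c d unfolding continuous_on_iff by (metis UNIV_I half_gt_zero)
  have fxc: "continuous_on UNIV (\<lambda>s. f (x0, \<Lambda> s))"
    by (intro continuous_on_compose2[OF fc] continuous_on_Pair continuous_on_const \<Lambda>c) auto
  define \<epsilon>2 where "\<epsilon>2 = r / (4 * (BL + 1))"
  have \<epsilon>2: "0 < \<epsilon>2" unfolding \<epsilon>2_def using r BL0 by simp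
  obtain \<delta>2 where \<delta>2: "\<delta>2 > 0" and \<delta>2P: "\<And>s. dist s s0 < \<delta>2 \<Longrightarrow> dist (f (x0, \<Lambda> s)) x0 < \<epsilon>2"
    using fxc \<epsilon>2 fix0 unfolding continuous_on_iff by (metis UNIV_I)
  define \<delta> where "\<delta> = min \<delta>1 \<delta>2"
  have \<delta>: "0 < \<delta>" unfolding \<delta>_def using \<delta>1 \<delta>2 by simp
  define T where "T = (\<lambda>s x. x - Li (x - f (x, \<Lambda> s)))"
  have Tfix: "T s x = x \<longleftrightarrow> f (x, \<Lambda> s) = x" for s x
  proof
    assume "T s x = x" hence "Li (x - f (x, \<Lambda> s)) = 0" unfolding T_def by simp
    thus "f (x, \<Lambda> s) = x" using Li0 by fastforce
  next
    assume "f (x, \<Lambda> s) = x" thus "T s x = x" unfolding T_def using linear_0[OF linLi] by simp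
  qed
  have Tdiff: "T s y - T s' y = Li (f (y, \<Lambda> s) - f (y, \<Lambda> s'))" for s s' y
  proof -
    have "T s y - T s' y = Li (y - f (y, \<Lambda> s')) - Li (y - f (y, \<Lambda> s))" unfolding T_def by simp
    also have "\<dots> = Li ((y - f (y, \<Lambda> s')) - (y - f (y, \<Lambda> s)))" by (rule linear_diff[OF linLi, symmetric])
    also have "(y - f (y, \<Lambda> s')) - (y - f (y, \<Lambda> s)) = f (y, \<Lambda> s) - f (y, \<Lambda> s')" by simp
    finally show ?thesis .
  qed
  have Tlip: "dist (T s x) (T s y) \<le> 1/2 * dist x y" if s: "dist s s0 < \<delta>" and x: "x \<in> cball x0 r" and y: "y \<in> cball x0 r" for s x y
  proof -
    have der: "(T s has_derivative (\<lambda>v. Li ((D z (\<Lambda> s) - D0) *v v))) (at z within cball x0 r)" for z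
    proof -
      have "(T s has_derivative (\<lambda>v. v - Li (v - D z (\<Lambda> s) *v v))) (at z)"
        unfolding T_def
        by (intro has_derivative_diff has_derivative_ident bounded_linear.has_derivative[OF blLi] pd)
      moreover have "(\<lambda>v. v - Li (v - D z (\<Lambda> s) *v v)) = (\<lambda>v. Li ((D z (\<Lambda> s) - D0) *v v))"
      proof
        fix v
        have "v - Li (v - D z (\<Lambda> s) *v v) = Li (L0 v) - Li (v - D z (\<Lambda> s) *v v)" using Li1 by simp
        also have "\<dots> = Li (L0 v - (v - D z (\<Lambda> s) *v v))" using linear_diff[OF linLi] by simp
        also have "L0 v - (v - D z (\<Lambda> s) *v v) = (D z (\<Lambda> s) - D0) *v v"
          unfolding L0_def by (simp add: matrix_vector_mult_diff_rdistrib)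
        finally show "v - Li (v - D z (\<Lambda> s) *v v) = Li ((D z (\<Lambda> s) - D0) *v v)" .
      qed
      ultimately show ?thesis by (simp add: has_derivative_at_withinI)
    qed
    have bnd: "onorm (\<lambda>v. Li ((D z (\<Lambda> s) - D0) *v v)) \<le> 1/2" if z: "z \<in> cball x0 r" for z
    proof -
      have "dist (z, \<Lambda> s) (x0, \<Lambda> s0) < d"
      proof -
        have "dist z x0 < d/2" using z r d unfolding r_def by (simp add: dist_commute)
        moreover have "dist (\<Lambda> s) (\<Lambda> s0) < d/2" using \<delta>1P s unfolding \<delta>_def by simp
        ultimately show ?thesis unfolding dist_Pair_Pair by (intro sqrt_sum_squares_half_less) auto
      qed
      hence "dist (D z (\<Lambda> s)) D0 < \<eta>" using dD by fastforce
      hence nD: "norm (D z (\<Lambda> s) - D0) < \<eta>" by (simp add: dist_norm)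
      have "onorm (\<lambda>v. Li ((D z (\<Lambda> s) - D0) *v v)) = onorm (Li \<circ> (*v) (D z (\<Lambda> s) - D0))"
        by (simp add: o_def)
      also have "\<dots> \<le> BL * nrm (D z (\<Lambda> s) - D0)"
        unfolding BL_def nrm_def by (rule onorm_compose[OF blLi]) simp
      also have "\<dots> \<le> BL * (n2 * norm (D z (\<Lambda> s) - D0))"
        by (rule mult_left_mono[OF _ BL0]) (unfold n2_def, rule nrm_le_norm)
      also have "\<dots> \<le> BL * (n2 * \<eta>)"
        using nD n2 BL0 by (intro mult_left_mono) auto
      also have "\<dots> = BL / (2 * (BL + 1))" unfolding \<eta>_def using n2 by simp
      also have "\<dots> \<le> 1/2" using BL0 by (simp add: field_simps)
      finally show ?thesis .
    qed
    have "norm (T s x - T s y) \<le> 1/2 * norm (x - y)"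
      by (rule differentiable_bound[OF convex_cball der bnd x y])
    thus ?thesis by (simp add: dist_norm)
  qed
  have T0: "dist (T s x0) x0 \<le> r/4" if s: "dist s s0 < \<delta>" for s
  proof -
    have "dist (T s x0) x0 = norm (Li (x0 - f (x0, \<Lambda> s)))" unfolding T_def by (simp add: dist_norm)
    also have "\<dots> \<le> BL * norm (x0 - f (x0, \<Lambda> s))" by (rule LiB)
    also have "\<dots> \<le> BL * \<epsilon>2" using \<delta>2P[of s] s BL0 unfolding \<delta>_def
      by (intro mult_left_mono) (auto simp: dist_norm norm_minus_commute)
    also have "\<dots> \<le> r/4" unfolding \<epsilon>2_def using BL0 r by (simp add: field_simps)
    finally show ?thesis .
  qed
  have Tin: "dist (T s x) x0 \<le> 3/4 * r" if s: "dist s s0 < \<delta>" and x: "x \<in> cball x0 r" for s x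
  proof -
    have "dist (T s x) x0 \<le> dist (T s x) (T s x0) + dist (T s x0) x0" by (rule dist_triangle)
    also have "dist (T s x) (T s x0) \<le> 1/2 * dist x x0" using Tlip[OF s x] r by simp
    also have "dist x x0 \<le> r" using x by (simp add: dist_commute)
    finally show ?thesis using T0[OF s] by linarith
  qed
  have ex1: "\<exists>!x\<in>cball x0 r. T s x = x" if s: "dist s s0 < \<delta>" for s
  proof (rule Banach_fix[of "cball x0 r" "1/2"])
    show "complete (cball x0 r)" by (simp add: complete_eq_closed)
    show "cball x0 r \<noteq> {}" using r by simp
    show "T s ` cball x0 r \<subseteq> cball x0 r"
    proof (rule image_subsetI)
      fix x assume "x \<in> cball x0 r"
      hence "dist (T s x) x0 \<le> 3/4 * r" by (rule Tin[OF s])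
      hence "dist x0 (T s x) \<le> r" using r by (simp add: dist_commute)
      thus "T s x \<in> cball x0 r" by simp
    qed
    show "\<And>x y. x \<in> cball x0 r \<Longrightarrow> y \<in> cball x0 r \<Longrightarrow> dist (T s x) (T s y) \<le> 1/2 * dist x y"
      using Tlip[OF s] by blast
  qed auto
  define g where "g = (\<lambda>s. THE x. x \<in> cball x0 r \<and> T s x = x)"
  have g1: "g s \<in> cball x0 r \<and> T s (g s) = g s" if s: "dist s s0 < \<delta>" for s
    unfolding g_def by (rule theI'[OF ex1[OF s]])
  have guniq: "x = g s" if s: "dist s s0 < \<delta>" and "x \<in> cball x0 r" "T s x = x" for s x
    using ex1[OF s] g1[OF s] that by blast
  have gball: "dist (g s) x0 < r" if s: "dist s s0 < \<delta>" for s
  proof -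
    have "dist (g s) x0 = dist (T s (g s)) x0" using g1[OF s] by simp
    also have "\<dots> \<le> 3/4 * r" using Tin[OF s] g1[OF s] by blast
    finally show ?thesis using r by simp
  qed
  have gcont: "continuous_on (ball s0 \<delta>) g"
  proof -
    have "isCont g s'" if s': "s' \<in> ball s0 \<delta>" for s'
    proof -
      have s'd: "dist s' s0 < \<delta>" using s' by (simp add: dist_commute)
      have ev: "eventually (\<lambda>s. s \<in> ball s0 \<delta>) (at s')" by (rule eventually_at_in_open'[OF open_ball s'])
      have "eventually (\<lambda>s. norm (g s - g s') \<le> 2 * BL * norm (f (g s', \<Lambda> s) - f (g s', \<Lambda> s'))) (at s')"
      proof (rule eventually_mono[OF ev])
        fix s assume "s \<in> ball s0 \<delta>"
        hence sd: "dist s s0 < \<delta>" by (simp add: dist_commute)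
        have "norm (g s - g s') = dist (T s (g s)) (T s' (g s'))" using g1[OF sd] g1[OF s'd] by (simp add: dist_norm)
        also have "\<dots> \<le> dist (T s (g s)) (T s (g s')) + dist (T s (g s')) (T s' (g s'))" by (rule dist_triangle)
        also have "dist (T s (g s)) (T s (g s')) \<le> 1/2 * dist (g s) (g s')" using Tlip[OF sd] g1[OF sd] g1[OF s'd] by blast
        also have "dist (T s (g s')) (T s' (g s')) = norm (Li (f (g s', \<Lambda> s) - f (g s', \<Lambda> s')))"
          using Tdiff by (simp add: dist_norm)
        also have "\<dots> \<le> BL * norm (f (g s', \<Lambda> s) - f (g s', \<Lambda> s'))" by (rule LiB)
        finally have "norm (g s - g s') \<le> 1/2 * norm (g s - g s') + BL * norm (f (g s', \<Lambda> s) - f (g s', \<Lambda> s'))"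
          by (simp add: dist_norm)
        thus "norm (g s - g s') \<le> 2 * BL * norm (f (g s', \<Lambda> s) - f (g s', \<Lambda> s'))" by simp
      qed
      moreover have "((\<lambda>s. 2 * BL * norm (f (g s', \<Lambda> s) - f (g s', \<Lambda> s'))) \<longlongrightarrow> 0) (at s')"
      proof -
        have "isCont f (g s', \<Lambda> s')" using fc by (simp add: continuous_on_eq_continuous_at)
        moreover have "((\<lambda>s. (g s', \<Lambda> s)) \<longlongrightarrow> (g s', \<Lambda> s')) (at s')"
          using \<Lambda>c by (intro tendsto_Pair tendsto_const) (simp add: continuous_on_eq_continuous_at isCont_def)
        ultimately have "((\<lambda>s. f (g s', \<Lambda> s)) \<longlongrightarrow> f (g s', \<Lambda> s')) (at s')"
          by (rule isCont_tendsto_compose)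
        hence "((\<lambda>s. f (g s', \<Lambda> s) - f (g s', \<Lambda> s')) \<longlongrightarrow> 0) (at s')" by (rule LIM_zero)
        hence "((\<lambda>s. norm (f (g s', \<Lambda> s) - f (g s', \<Lambda> s'))) \<longlongrightarrow> 0) (at s')" by (rule tendsto_norm_zero)
        thus ?thesis by (rule tendsto_mult_right_zero)
      qed
      ultimately have "((\<lambda>s. g s - g s') \<longlongrightarrow> 0) (at s')" by (rule Lim_null_comparison)
      thus ?thesis unfolding isCont_def by (rule LIM_zero_cancel)
    qed
    thus ?thesis by (simp add: continuous_on_eq_continuous_at)
  qed
  show ?thesis
  proof (rule exI[of _ \<delta>], intro conjI)
    show "0 < \<delta>" by (rule \<delta>)
    show "\<exists>r>0. \<exists>g. continuous_on (ball s0 \<delta>) g \<and>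
           (\<forall>s\<in>ball s0 \<delta>. dist (g s) x0 < r \<and> f (g s, \<Lambda> s) = g s) \<and>
           (\<forall>s\<in>ball s0 \<delta>. \<forall>x. dist x x0 < r \<longrightarrow> f (x, \<Lambda> s) = x \<longrightarrow> x = g s)"
    proof (rule exI[of _ r], intro conjI, rule r, rule exI[of _ g], intro conjI ballI allI impI)
      show "continuous_on (ball s0 \<delta>) g" by (rule gcont)
    next
      fix s assume "s \<in> ball s0 \<delta>" hence sd: "dist s s0 < \<delta>" by (simp add: dist_commute)
      show "dist (g s) x0 < r" by (rule gball[OF sd])
      show "f (g s, \<Lambda> s) = g s" using g1[OF sd] Tfix by blast
    next
      fix s x assume "s \<in> ball s0 \<delta>" "dist x x0 < r" "f (x, \<Lambda> s) = x"
      hence sd: "dist s s0 < \<delta>" by (simp add: dist_commute)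
      show "x = g s" using guniq[OF sd] \<open>dist x x0 < r\<close> \<open>f (x, \<Lambda> s) = x\<close> Tfix
        by (simp add: dist_commute less_imp_le)
    qed
  qed
qed

lemma agree:
  fixes b g :: "real \<Rightarrow> 'a::metric_space"
  assumes J: "connected J" "J \<subseteq> ball tc \<delta>"
    and bc: "continuous_on J b" and bF: "\<forall>u\<in>J. F u (b u)"
    and gc: "continuous_on (ball tc \<delta>) g" and gin: "\<forall>s\<in>ball tc \<delta>. dist (g s) xc < r"
    and uniq: "\<forall>s\<in>ball tc \<delta>. \<forall>x. dist x xc < r \<longrightarrow> F s x \<longrightarrow> x = g s"
    and t: "t \<in> J" "b t = g t"
  shows "\<forall>u\<in>J. b u = g u"
proof -
  define S where "S = {u\<in>J. dist (b u) (g u) = 0}"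
  have gcJ: "continuous_on J g" using continuous_on_subset[OF gc J(2)] .
  have cl: "closedin (top_of_set J) S" unfolding S_def
    by (rule continuous_closedin_preimage_constant) (intro continuous_on_dist bc gcJ)
  have op: "openin (top_of_set J) S"
    unfolding openin_euclidean_subtopology_iff
  proof (intro conjI ballI)
    show "S \<subseteq> J" unfolding S_def by auto
  next
    fix u assume "u \<in> S"
    hence uJ: "u \<in> J" and bu: "b u = g u" unfolding S_def by auto
    have "dist (g u) xc < r" using gin uJ J(2) by auto
    define e0 where "e0 = r - dist (g u) xc"
    have e0: "0 < e0" unfolding e0_def using \<open>dist (g u) xc < r\<close> by simp
    obtain e where e: "e > 0" and eP: "\<And>u'. u' \<in> J \<Longrightarrow> dist u' u < e \<Longrightarrow> dist (b u') (b u) < e0"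
      using bc uJ e0 unfolding continuous_on_iff by metis
    show "\<exists>e>0. \<forall>x'\<in>J. dist x' u < e \<longrightarrow> x' \<in> S"
    proof (intro exI[of _ e] conjI ballI impI, rule e)
      fix u' assume u': "u' \<in> J" "dist u' u < e"
      have "dist (b u') xc \<le> dist (b u') (b u) + dist (b u) xc" by (rule dist_triangle)
      moreover have "dist (b u) xc = dist (g u) xc" using bu by simp
      ultimately have "dist (b u') xc < r" using eP[OF u'] unfolding e0_def by linarith
      hence "b u' = g u'" using uniq bF u'(1) J(2) by blast
      thus "u' \<in> S" unfolding S_def using u'(1) by simp
    qed
  qed
  have "S \<noteq> {}" using t unfolding S_def by auto
  hence "S = J" using J(1) cl op unfolding connected_clopen by blast
  thus ?thesis unfolding S_def by auto
qed

lemma graph_cont: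
  fixes X :: "real \<Rightarrow> 'a::metric_space" and F :: "real \<Rightarrow> 'a \<Rightarrow> bool"
  assumes conn: "connected (range (\<lambda>s. (s, X s)))"
    and FX: "\<And>s. F s (X s)"
    and boxes: "\<And>s0. \<exists>\<delta>>0. \<exists>r>0. \<exists>g. continuous_on (ball s0 \<delta>) g \<and>
           (\<forall>s\<in>ball s0 \<delta>. dist (g s) (X s0) < r \<and> F s (g s)) \<and>
           (\<forall>s\<in>ball s0 \<delta>. \<forall>x. dist x (X s0) < r \<longrightarrow> F s x \<longrightarrow> x = g s)"
  shows "continuous_on UNIV X"
proof -
  define G where "G = range (\<lambda>s. (s, X s))"
  have "isCont X s1" for s1
  proof -
    define x1 where "x1 = X s1"
    define Q where "Q = {(t, y). \<exists>b. continuous_on (closed_segment s1 t) b \<and> b s1 = x1 \<and> b t = y \<and>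
                                   (\<forall>u\<in>closed_segment s1 t. F u (b u))}"
    \<comment> \<open>extension within a box\<close>
    have ext: "(t'', g t'') \<in> Q"
      if gc: "continuous_on (ball t0 \<delta>) g" and gin: "\<forall>s\<in>ball t0 \<delta>. dist (g s) x0 < r \<and> F s (g s)"
        and uniq: "\<forall>s\<in>ball t0 \<delta>. \<forall>x. dist x x0 < r \<longrightarrow> F s x \<longrightarrow> x = g s"
        and tI: "t \<in> ball t0 \<delta>" and t''I: "t'' \<in> ball t0 \<delta>" and tQ: "(t, g t) \<in> Q"
      for t0 \<delta> g x0 r t t''
    proof -
      obtain b where bc: "continuous_on (closed_segment s1 t) b" and b1: "b s1 = x1" and bt: "b t = g t"
        and bF: "\<forall>u\<in>closed_segment s1 t. F u (b u)"
        using tQ unfolding Q_def by auto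
      define A1 where "A1 = closed_segment s1 t"
      define A2 where "A2 = closed_segment t t''"
      have A2I: "A2 \<subseteq> ball t0 \<delta>" unfolding A2_def using tI t''I
        by (simp add: closed_segment_subset convex_ball)
      have c1: "connected (A1 \<inter> A2)" unfolding A1_def A2_def
        by (intro convex_connected convex_Int convex_closed_segment)
      have c2: "A1 \<inter> A2 \<subseteq> ball t0 \<delta>" using A2I by auto
      have c3: "continuous_on (A1 \<inter> A2) b" using bc unfolding A1_def by (rule continuous_on_subset) auto
      have c4: "\<forall>u\<in>A1 \<inter> A2. F u (b u)" using bF unfolding A1_def by auto
      have c5: "t \<in> A1 \<inter> A2" unfolding A1_def A2_def by simp
      have gin': "\<forall>s\<in>ball t0 \<delta>. dist (g s) x0 < r" using gin by blast
      have agr: "\<forall>u\<in>A1 \<inter> A2. b u = g u"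
        by (rule agree[OF c1 c2 c3 c4 gc gin' uniq c5 bt])
      define b' where "b' = (\<lambda>u. if u \<in> A2 then g u else b u)"
      have b'A1: "\<forall>u\<in>A1. b' u = b u" unfolding b'_def using agr by auto
      have b'A2: "\<forall>u\<in>A2. b' u = g u" unfolding b'_def by auto
      have sub: "closed_segment s1 t'' \<subseteq> A1 \<union> A2" unfolding A1_def A2_def
        by (auto simp: closed_segment_eq_real_ivl split: if_splits)
      have "continuous_on (A1 \<union> A2) b'"
      proof (rule continuous_on_closed_Un)
        show "closed A1" "closed A2" unfolding A1_def A2_def by simp_all
        show "continuous_on A1 b'" using continuous_on_eq[OF bc[folded A1_def]] b'A1 by auto
        show "continuous_on A2 b'" using continuous_on_eq[OF continuous_on_subset[OF gc A2I]] b'A2 by auto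
      qed
      hence "continuous_on (closed_segment s1 t'') b'" using sub by (rule continuous_on_subset)
      moreover have "b' s1 = x1" using b'A1 b1 unfolding A1_def by simp
      moreover have "b' t'' = g t''" using b'A2 unfolding A2_def by simp
      moreover have "\<forall>u\<in>closed_segment s1 t''. F u (b' u)"
      proof
        fix u assume "u \<in> closed_segment s1 t''"
        hence "u \<in> A1 \<or> u \<in> A2" using sub by auto
        thus "F u (b' u)"
        proof
          assume "u \<in> A2" thus ?thesis using b'A2 gin A2I by auto
        next
          assume "u \<in> A1" thus ?thesis using b'A1 bF unfolding A1_def by auto
        qed
      qed
      ultimately show ?thesis unfolding Q_def by blast
    qed
    \<comment> \<open>local constancy of membership in Q along G\<close>
    have loc: "\<exists>e>0. \<forall>p'\<in>G. dist p' (t0, X t0) < e \<longrightarrow> (p' \<in> Q \<longleftrightarrow> (t0, X t0) \<in> Q)" for t0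
    proof -
      obtain \<delta> r g where \<delta>: "\<delta> > 0" and r: "r > 0" and gc: "continuous_on (ball t0 \<delta>) g"
        and gin: "\<forall>s\<in>ball t0 \<delta>. dist (g s) (X t0) < r \<and> F s (g s)"
        and uniq: "\<forall>s\<in>ball t0 \<delta>. \<forall>x. dist x (X t0) < r \<longrightarrow> F s x \<longrightarrow> x = g s"
        using boxes[of t0] by blast
      have t0I: "t0 \<in> ball t0 \<delta>" using \<delta> by simp
      have gt0: "X t0 = g t0" using uniq t0I FX[of t0] r by simp
      show ?thesis
      proof (intro exI[of _ "min \<delta> r"] conjI ballI impI)
        show "0 < min \<delta> r" using \<delta> r by simp
      next
        fix p' assume p'G: "p' \<in> G" and dp: "dist p' (t0, X t0) < min \<delta> r"
        then obtain t' where p': "p' = (t', X t')" unfolding G_def by auto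
        have "dist t' t0 < \<delta>" using dp dist_fst_le[of p' "(t0, X t0)"] p' by simp
        hence t'I: "t' \<in> ball t0 \<delta>" by (simp add: dist_commute)
        have "dist (X t') (X t0) < r" using dp dist_snd_le[of p' "(t0, X t0)"] p' by simp
        hence gt': "X t' = g t'" using uniq t'I FX[of t'] by blast
        show "p' \<in> Q \<longleftrightarrow> (t0, X t0) \<in> Q"
        proof
          assume "p' \<in> Q" thus "(t0, X t0) \<in> Q"
            unfolding gt0 using ext[OF gc gin uniq t'I t0I] p' gt' by simp
        next
          assume "(t0, X t0) \<in> Q" thus "p' \<in> Q"
            unfolding p' gt' using ext[OF gc gin uniq t0I t'I] gt0 by simp
        qed
      qed
    qed
    have GQ: "G \<subseteq> Q"
    proof -
      have op: "openin (top_of_set G) (G \<inter> Q)"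
        unfolding openin_euclidean_subtopology_iff
      proof (intro conjI ballI)
        fix p assume "p \<in> G \<inter> Q"
        then obtain t0 where p: "p = (t0, X t0)" "p \<in> Q" unfolding G_def by auto
        obtain e where "e > 0" "\<forall>p'\<in>G. dist p' (t0, X t0) < e \<longrightarrow> (p' \<in> Q \<longleftrightarrow> (t0, X t0) \<in> Q)"
          using loc[of t0] by blast
        thus "\<exists>e>0. \<forall>x'\<in>G. dist x' p < e \<longrightarrow> x' \<in> G \<inter> Q" using p by blast
      qed auto
      have op2: "openin (top_of_set G) (G - Q)"
        unfolding openin_euclidean_subtopology_iff
      proof (intro conjI ballI)
        fix p assume "p \<in> G - Q"
        then obtain t0 where p: "p = (t0, X t0)" "p \<notin> Q" unfolding G_def by auto
        obtain e where "e > 0" "\<forall>p'\<in>G. dist p' (t0, X t0) < e \<longrightarrow> (p' \<in> Q \<longleftrightarrow> (t0, X t0) \<in> Q)"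
          using loc[of t0] by blast
        thus "\<exists>e>0. \<forall>x'\<in>G. dist x' p < e \<longrightarrow> x' \<in> G - Q" using p by blast
      qed auto
      have cl: "closedin (top_of_set G) (G \<inter> Q)"
      proof -
        have "G - G \<inter> Q = G - Q" by auto
        thus ?thesis unfolding closedin_def using op2 by simp
      qed
      have "(s1, x1) \<in> Q" unfolding Q_def
        by (auto intro!: exI[of _ "\<lambda>_. x1"] simp: FX x1_def)
      hence "G \<inter> Q \<noteq> {}" unfolding G_def x1_def by auto
      hence "G \<inter> Q = G" using conn op cl unfolding connected_clopen G_def by blast
      thus ?thesis by auto
    qed
    obtain \<delta> r g where \<delta>: "\<delta> > 0" and r: "r > 0" and gc: "continuous_on (ball s1 \<delta>) g"
      and gin: "\<forall>s\<in>ball s1 \<delta>. dist (g s) (X s1) < r \<and> F s (g s)"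
      and uniq: "\<forall>s\<in>ball s1 \<delta>. \<forall>x. dist x (X s1) < r \<longrightarrow> F s x \<longrightarrow> x = g s"
      using boxes[of s1] by blast
    have s1I: "s1 \<in> ball s1 \<delta>" using \<delta> by simp
    have gs1: "X s1 = g s1" using uniq s1I FX[of s1] r by simp
    have Xg: "X t = g t" if tI: "t \<in> ball s1 \<delta>" for t
    proof -
      have "(t, X t) \<in> Q" using GQ unfolding G_def by auto
      then obtain b where bc: "continuous_on (closed_segment s1 t) b" and b1: "b s1 = x1" and bt: "b t = X t"
        and bF: "\<forall>u\<in>closed_segment s1 t. F u (b u)"
        unfolding Q_def by auto
      have segI: "closed_segment s1 t \<subseteq> ball s1 \<delta>" using s1I tI by (simp add: closed_segment_subset convex_ball)
      have gin': "\<forall>s\<in>ball s1 \<delta>. dist (g s) (X s1) < r" using gin by blast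
      have s1seg: "s1 \<in> closed_segment s1 t" by simp
      have bs1: "b s1 = g s1" using b1 gs1 unfolding x1_def by simp
      have "\<forall>u\<in>closed_segment s1 t. b u = g u"
        by (rule agree[OF convex_connected[OF convex_closed_segment] segI bc bF gc gin' uniq s1seg bs1])
      thus ?thesis using bt by auto
    qed
    have "continuous_on (ball s1 \<delta>) X" using continuous_on_eq[OF gc] Xg by auto
    thus ?thesis using s1I by (simp add: continuous_on_eq_continuous_at)
  qed
  thus ?thesis by (simp add: continuous_on_eq_continuous_at)
qed

lemma bound_mono:
  fixes K1 K c1 c x :: real
  assumes "0 \<le> K1" "K1 \<le> K" "0 < c1" "c1 \<le> c" "x \<le> K1 * c1 ^ n"
  shows "x \<le> K * c ^ n"
proof -
  have "c1 ^ n \<le> c ^ n" by (rule power_mono[OF assms(4)]) (use assms(3) in simp)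
  hence "K1 * c1 ^ n \<le> K * c ^ n"
    using assms(1,2,3) by (intro mult_mono) auto
  thus ?thesis using assms(5) by linarith
qed

theorem mainTheorem9:
  fixes f :: "(real^'l) \<times> (real^'m) \<Rightarrow> real^'l"
    and \<Lambda> :: "real \<Rightarrow> real^'m" and lm lp :: "real^'m"
    and X :: "real \<Rightarrow> real^'l"
  assumes "C1 f"
    and "parameter_shift \<Lambda> lm lp"
    and "stable_path f \<Lambda> lm lp X"
  shows "\<exists>\<kappa> c. \<kappa> > 0 \<and> 0 < c \<and> c < 1 \<and>
           (\<forall>s. \<forall>n::nat. onorm (\<lambda>v. matpow (Dx f (X s) (\<Lambda> s)) n *v v) < \<kappa> * c ^ n)"
proof -
  obtain f' where df: "\<And>z. (f has_derivative blinfun_apply (f' z)) (at z)" and cf: "continuous_on UNIV f'"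
    using assms(1) unfolding C1_def by blast
  have fc: "continuous_on UNIV f"
    using has_derivative_continuous[OF df] by (simp add: continuous_on_eq_continuous_at)
  have pd: "\<And>x p. ((\<lambda>y. f (y, p)) has_derivative (\<lambda>v. Dx f x p *v v)) (at x)"
    using partial_deriv(1)[OF df] by blast
  have Dc: "continuous_on UNIV (\<lambda>z. Dx f (fst z) (snd z))" by (rule Dx_cont[OF df cf])
  obtain \<Lambda>' where d\<Lambda>: "\<And>s. (\<Lambda> has_vector_derivative \<Lambda>' s) (at s)"
    and \<Lambda>m: "(\<Lambda> \<longlongrightarrow> lm) at_bot" and \<Lambda>p: "(\<Lambda> \<longlongrightarrow> lp) at_top"
    using assms(2) unfolding parameter_shift_def by blast
  have \<Lambda>c: "continuous_on UNIV \<Lambda>"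
    using has_vector_derivative_continuous[OF d\<Lambda>] by (simp add: continuous_on_eq_continuous_at)
  have fixX: "\<And>s. f (X s, \<Lambda> s) = X s" and conn: "connected (range (\<lambda>s. (s, X s)))"
    and srX: "\<And>s. Defs.spectral_radius (Dx f (X s) (\<Lambda> s)) < 1"
    using assms(3) unfolding stable_path_def by blast+
  obtain Xm Xp where Xm: "(X \<longlongrightarrow> Xm) at_bot" and Xp: "(X \<longlongrightarrow> Xp) at_top"
    and srm: "Defs.spectral_radius (Dx f Xm lm) < 1" and srp: "Defs.spectral_radius (Dx f Xp lp) < 1"
    using assms(3) unfolding stable_path_def by blast
  define A where "A = (\<lambda>s. Dx f (X s) (\<Lambda> s))"
  have decA: "decays (A s)" for s unfolding A_def by (rule sr_decays[OF srX])
  have decm: "decays (Dx f Xm lm)" by (rule sr_decays[OF srm])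
  have decp: "decays (Dx f Xp lp)" by (rule sr_decays[OF srp])
  have boxes: "\<exists>\<delta>>0. \<exists>r>0. \<exists>g. continuous_on (ball s0 \<delta>) g \<and>
           (\<forall>s\<in>ball s0 \<delta>. dist (g s) (X s0) < r \<and> f (g s, \<Lambda> s) = g s) \<and>
           (\<forall>s\<in>ball s0 \<delta>. \<forall>x. dist x (X s0) < r \<longrightarrow> f (x, \<Lambda> s) = x \<longrightarrow> x = g s)" for s0
  proof (rule box[OF fc pd Dc \<Lambda>c fixX])
    fix v assume "Dx f (X s0) (\<Lambda> s0) *v v = v"
    thus "v = 0" using decays_fix decA unfolding A_def by blast
  qed
  have Xc: "continuous_on UNIV X"
    by (rule graph_cont[where F="\<lambda>s x. f (x, \<Lambda> s) = x", OF conn fixX boxes])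
  have Ac: "continuous_on UNIV A"
  proof -
    have "continuous_on UNIV (\<lambda>s. Dx f (fst (X s, \<Lambda> s)) (snd (X s, \<Lambda> s)))"
      by (rule continuous_on_compose2[OF Dc]) (auto intro!: continuous_on_Pair Xc \<Lambda>c)
    thus ?thesis unfolding A_def by simp
  qed
  have Dcat: "isCont (\<lambda>z. Dx f (fst z) (snd z)) z" for z
    using Dc continuous_on_eq_continuous_at[OF open_UNIV] by blast
  have Ap: "(A \<longlongrightarrow> Dx f Xp lp) at_top"
    using isCont_tendsto_compose[OF Dcat tendsto_Pair[OF Xp \<Lambda>p]] unfolding A_def by simp
  have Am: "(A \<longlongrightarrow> Dx f Xm lm) at_bot"
    using isCont_tendsto_compose[OF Dcat tendsto_Pair[OF Xm \<Lambda>m]] unfolding A_def by simp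
  obtain ep Kp cp where ep: "ep > 0" and Kp: "0 \<le> Kp" and cp: "0 < cp" "cp < 1"
    and bp: "\<And>B. dist B (Dx f Xp lp) < ep \<Longrightarrow> (\<forall>n. nrm (matpow B n) \<le> Kp * cp^n)"
    using good_nbhd[OF decp] by blast
  obtain em Km cm where em: "em > 0" and Km: "0 \<le> Km" and cm: "0 < cm" "cm < 1"
    and bm: "\<And>B. dist B (Dx f Xm lm) < em \<Longrightarrow> (\<forall>n. nrm (matpow B n) \<le> Km * cm^n)"
    using good_nbhd[OF decm] by blast
  have "eventually (\<lambda>s. dist (A s) (Dx f Xp lp) < ep) at_top" by (rule tendstoD[OF Ap ep])
  then obtain Tp where Tp: "\<And>s. s \<ge> Tp \<Longrightarrow> dist (A s) (Dx f Xp lp) < ep"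
    unfolding eventually_at_top_linorder by blast
  have "eventually (\<lambda>s. dist (A s) (Dx f Xm lm) < em) at_bot" by (rule tendstoD[OF Am em])
  then obtain Tm where Tm: "\<And>s. s \<le> Tm \<Longrightarrow> dist (A s) (Dx f Xm lm) < em"
    unfolding eventually_at_bot_linorder by blast
  have cS: "compact (A ` {Tm..Tp})"
    by (rule compact_continuous_image[OF continuous_on_subset[OF Ac] compact_Icc]) simp
  obtain K0 c0 where K0: "0 \<le> K0" and c0: "0 < c0" "c0 < 1"
    and b0: "\<forall>B\<in>A ` {Tm..Tp}. \<forall>n. nrm (matpow B n) \<le> K0 * c0^n"
    using good_compact[OF cS] decA by blast
  define K where "K = max K0 (max Kp Km)"
  define c where "c = max c0 (max cp cm)"
  have K: "0 \<le> K" unfolding K_def using K0 by simp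
  have c: "0 < c" "c < 1" unfolding c_def using c0 cp cm by auto
  have KK: "Kp \<le> K" "Km \<le> K" "K0 \<le> K" unfolding K_def by auto
  have cc: "cp \<le> c" "cm \<le> c" "c0 \<le> c" unfolding c_def by auto
  have allb: "nrm (matpow (A s) n) \<le> K * c^n" for s n
  proof (cases "s \<ge> Tp")
    case True
    have "nrm (matpow (A s) n) \<le> Kp * cp^n" using bp[OF Tp[OF True]] by blast
    thus ?thesis by (rule bound_mono[OF Kp KK(1) cp(1) cc(1)])
  next
    case False
    show ?thesis
    proof (cases "s \<le> Tm")
      case True
      have "nrm (matpow (A s) n) \<le> Km * cm^n" using bm[OF Tm[OF True]] by blast
      thus ?thesis by (rule bound_mono[OF Km KK(2) cm(1) cc(2)])
    next
      case False2: False
      have "A s \<in> A ` {Tm..Tp}" using False False2 by auto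
      hence "nrm (matpow (A s) n) \<le> K0 * c0^n" using b0 by blast
      thus ?thesis by (rule bound_mono[OF K0 KK(3) c0(1) cc(3)])
    qed
  qed
  show ?thesis
  proof (rule exI[of _ "K + 1"], rule exI[of _ c], intro conjI allI)
    show "0 < K + 1" using K by simp
    show "0 < c" "c < 1" using c by auto
  next
    fix s n
    have "onorm (\<lambda>v. matpow (Dx f (X s) (\<Lambda> s)) n *v v) = nrm (matpow (A s) n)"
      unfolding nrm_def A_def by simp
    also have "\<dots> \<le> K * c^n" by (rule allb)
    also have "\<dots> < (K + 1) * c^n" using c by (simp add: distrib_right)
    finally show "onorm (\<lambda>v. matpow (Dx f (X s) (\<Lambda> s)) n *v v) < (K + 1) * c ^ n" .
  qed
qed

end
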